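(* Let $N\ge3$. Take $X_j=\sigma_x$ for $j=1,\dots,N-1$, $X_j'=\sigma_x$ for $j=1,\dots,N-2$, $X_{N-1}'=\sigma_y$, and $X_N=(\sigma_x-\sigma_y)/\sqrt2$, $X_N'=(\sigma_x+\sigma_y)/\sqrt2$; let $I^N_{CHSH}=\sum_{a,b\in\{0,1\}}(-1)^{ab}\mathbb A_a\otimes\mathbb B_b$. Then $2\sqrt2$ is the largest eigenvalue of $I^N_{CHSH}$, $|G\rangle$ is an eigenvector for it, and its eigenspace has dimension exactly $2^{N-2}$, spanned by the states $\bigotimes_{k\in K}\sigma_x^{(k)}|G\rangle$ with $K\subseteq\{1,\dots,N-2\}$.
   Context: $|G\rangle=\frac{1}{\sqrt2}(|0\cdots0\rangle+|1\cdots1\rangle)$ is the $N$-qubit GHZ state; $\sigma_x,\sigma_y,\sigma_z$ are Pauli matrices and $\sigma_x^{(k)}$ denotes $\sigma_x$ acting on the $k$-th qubit. $\mathbb A_0=\bigotimes_{j=1}^{N-1}X_j$, $\mathbb A_1=\bigotimes_{j=1}^{N-1}X_j'$ act on qubits $1,\dots,N-1$, and $\mathbb B_0=X_N$, $\mathbb B_1=X_N'$ act on qubit $N$. *)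

theory Defs
  imports "Jordan_Normal_Form.Jordan_Normal_Form_Uniqueness"
begin

definition sigma_x :: "complex mat" where
  "sigma_x = mat_of_rows_list 2 [[0, 1], [1, 0]]"
definition sigma_y :: "complex mat" where
  "sigma_y = mat_of_rows_list 2 [[0, -\<i>], [\<i>, 0]]"

(* Kronecker (tensor) product; the left factor is the more significant index *)
definition kron :: "complex mat \<Rightarrow> complex mat \<Rightarrow> complex mat" where
  "kron A B = mat (dim_row A * dim_row B) (dim_col A * dim_col B)
     (\<lambda>(i, j). A $$ (i div dim_row B, j div dim_col B) * B $$ (i mod dim_row B, j mod dim_col B))"

(* tensor product of a list of operators, first element acts on the first qubit *)
definition kron_list :: "complex mat list \<Rightarrow> complex mat" where
  "kron_list Ms = foldr kron Ms (1\<^sub>m 1)"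

(* N-qubit GHZ state (|0...0> + |1...1>)/sqrt 2; |0...0> has index 0, |1...1> index 2^N - 1 *)
definition ghz :: "nat \<Rightarrow> complex vec" where
  "ghz N = vec (2 ^ N) (\<lambda>i. if i = 0 \<or> i = 2 ^ N - 1 then complex_of_real (1 / sqrt 2) else 0)"

definition X :: "nat \<Rightarrow> nat \<Rightarrow> complex mat" where
  "X N j = (if j = N then (1 / complex_of_real (sqrt 2)) \<cdot>\<^sub>m (sigma_x - sigma_y) else sigma_x)"
definition X' :: "nat \<Rightarrow> nat \<Rightarrow> complex mat" where
  "X' N j = (if j = N then (1 / complex_of_real (sqrt 2)) \<cdot>\<^sub>m (sigma_x + sigma_y)
             else if j = N - 1 then sigma_y else sigma_x)"

definition AA :: "nat \<Rightarrow> nat \<Rightarrow> complex mat" where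
  "AA N a = kron_list (map (if a = 0 then X N else X' N) [1..<N])"
definition BB :: "nat \<Rightarrow> nat \<Rightarrow> complex mat" where
  "BB N b = (if b = 0 then X N N else X' N N)"

definition I_CHSH :: "nat \<Rightarrow> complex mat" where
  "I_CHSH N = kron (AA N 0) (BB N 0) + kron (AA N 0) (BB N 1)
             + kron (AA N 1) (BB N 0) + (-1) \<cdot>\<^sub>m kron (AA N 1) (BB N 1)"

definition sigma_x_on :: "nat \<Rightarrow> nat set \<Rightarrow> complex mat" where
  "sigma_x_on N K = kron_list (map (\<lambda>k. if k \<in> K then sigma_x else 1\<^sub>m 2) [1..<N+1])"

definition eigenspace :: "complex mat \<Rightarrow> complex \<Rightarrow> complex vec set" where
  "eigenspace A e = {v \<in> carrier_vec (dim_row A). A *\<^sub>v v = e \<cdot>\<^sub>v v}"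

end

theory Submission
  imports Defs
begin


lemma sx_carrier[simp]: "sigma_x \<in> carrier_mat 2 2"
  unfolding sigma_x_def mat_of_rows_list_def by (simp add: numeral_2_eq_2)
lemma sy_carrier[simp]: "sigma_y \<in> carrier_mat 2 2"
  unfolding sigma_y_def mat_of_rows_list_def by (simp add: numeral_2_eq_2)
lemma sx_dims[simp]: "dim_row sigma_x = 2" "dim_col sigma_x = 2"
  using sx_carrier unfolding carrier_mat_def by blast+
lemma sy_dims[simp]: "dim_row sigma_y = 2" "dim_col sigma_y = 2"
  using sy_carrier unfolding carrier_mat_def by blast+

lemma sx_entry: "a < 2 \<Longrightarrow> b < 2 \<Longrightarrow> sigma_x $$ (a,b) = (if a = b then 0 else 1)"
  by (auto simp: sigma_x_def mat_of_rows_list_def less_2_cases_iff)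
lemma sy_entry: "a < 2 \<Longrightarrow> b < 2 \<Longrightarrow> sigma_y $$ (a,b) = (if a = b then 0 else if a = 0 then -\<i> else \<i>)"
  by (auto simp: sigma_y_def mat_of_rows_list_def less_2_cases_iff)

lemma kron_dims[simp]: "dim_row (kron A B) = dim_row A * dim_row B" "dim_col (kron A B) = dim_col A * dim_col B"
  by (simp_all add: kron_def)

lemma kron_entry: "i < dim_row A * dim_row B \<Longrightarrow> j < dim_col A * dim_col B \<Longrightarrow>
  kron A B $$ (i,j) = A $$ (i div dim_row B, j div dim_col B) * B $$ (i mod dim_row B, j mod dim_col B)"
  by (simp add: kron_def)

lemma kron_one_right: "kron A (1\<^sub>m 1) = A"
  by (rule eq_matI) (auto simp: kron_def)

lemma pair_sum_iff:
  fixes p q M :: nat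
  assumes "M > 0" "p < 2*M" "q < 2*M"
  shows "(p div M \<noteq> q div M \<and> p mod M + q mod M = M - 1) \<longleftrightarrow> p + q = 2*M - 1"
proof -
  define a where "a = p div M"
  define b where "b = q div M"
  define r where "r = p mod M"
  define s where "s = q mod M"
  have p: "p = M * a + r" and q: "q = M * b + s" unfolding a_def b_def r_def s_def by simp_all
  have a: "a < 2" "b < 2" using assms unfolding a_def b_def by (auto simp: div_less_iff_less_mult mult.commute)
  have rs: "r < M" "s < M" using assms unfolding r_def s_def by auto
  have ab: "(a = 0 \<or> a = 1) \<and> (b = 0 \<or> b = 1)" using a by auto
  show ?thesis unfolding a_def[symmetric] b_def[symmetric] r_def[symmetric] s_def[symmetric]
    using ab rs p q by auto
qed

lemma rep_kron:
  assumes B: "B \<in> carrier_mat d d" and d: "d > 0"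
  shows "foldr kron (replicate m sigma_x) B = mat (2^m*d) (2^m*d)
    (\<lambda>(i,j). if i div d + j div d = 2^m - 1 then B $$ (i mod d, j mod d) else 0)"
proof (induction m)
  case 0
  show ?case using B by (intro eq_matI) auto
next
  case (Suc m)
  let ?D = "2^m*d"
  have eq: "foldr kron (replicate (Suc m) sigma_x) B = kron sigma_x (foldr kron (replicate m sigma_x) B)"
    by (simp del: foldr_replicate)
  show ?case
  proof (rule eq_matI)
    fix i j assume i: "i < dim_row (mat (2 ^ Suc m * d) (2 ^ Suc m * d)
       (\<lambda>(i, j). if i div d + j div d = 2 ^ Suc m - 1 then B $$ (i mod d, j mod d) else 0))"
      and j: "j < dim_col (mat (2 ^ Suc m * d) (2 ^ Suc m * d)
       (\<lambda>(i, j). if i div d + j div d = 2 ^ Suc m - 1 then B $$ (i mod d, j mod d) else 0))"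
    from i j have i: "i < 2 * ?D" and j: "j < 2*?D" by auto
    have e1: "i div ?D = (i div d) div 2^m" "j div ?D = (j div d) div 2^m"
      by (simp_all add: div_mult2_eq mult.commute)
    have e2: "(i mod ?D) div d = (i div d) mod 2^m" "(j mod ?D) div d = (j div d) mod 2^m"
      using d by (simp_all add: mod_mult2_eq mult.commute)
    have e3: "(i mod ?D) mod d = i mod d" "(j mod ?D) mod d = j mod d"
      by (simp_all add: mod_mod_cancel)
    have lt: "i div d < 2 * 2^m" "j div d < 2 * 2^m" using i j d
      by (auto simp: div_less_iff_less_mult mult.assoc mult.commute mult.left_commute)
    have ip: "i div ?D < 2" "j div ?D < 2" using i j less_mult_imp_div_less[of i 2 ?D] less_mult_imp_div_less[of j 2 ?D] by auto
    have "foldr kron (replicate (Suc m) sigma_x) B $$ (i,j) =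
       sigma_x $$ (i div ?D, j div ?D) * foldr kron (replicate m sigma_x) B $$ (i mod ?D, j mod ?D)"
      using i j unfolding eq Suc.IH by (simp add: kron_def)
    also have "\<dots> = (if i div d + j div d = 2 ^ Suc m - 1 then B $$ (i mod d, j mod d) else 0)"
      using pair_sum_iff[of "2^m" "i div d" "j div d"] lt ip d
      by (auto simp: sx_entry Suc.IH e1 e2 e3 mod_less_divisor simp del: foldr_replicate)
    finally show "foldr kron (replicate (Suc m) sigma_x) B $$ (i,j) =
      mat (2 ^ Suc m * d) (2 ^ Suc m * d)
       (\<lambda>(i, j). if i div d + j div d = 2 ^ Suc m - 1 then B $$ (i mod d, j mod d) else 0) $$ (i, j)"
      using i j by simp
  qed (auto simp: eq Suc.IH simp del: foldr_replicate)
qed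

lemma A0_mat: assumes "N \<ge> 1"
  shows "AA N 0 = mat (2^(N-1)) (2^(N-1)) (\<lambda>(i,j). if i + j = 2^(N-1) - 1 then 1 else 0)"
proof -
  have m: "map (X N) [1..<N] = replicate (N-1) sigma_x"
    by (rule nth_equalityI) (auto simp: X_def)
  have "foldr kron (replicate (N-1) sigma_x) (1\<^sub>m 1) = mat (2^(N-1)*1) (2^(N-1)*1)
    (\<lambda>(i,j). if i div 1 + j div 1 = 2^(N-1) - 1 then (1\<^sub>m 1) $$ (i mod 1, j mod 1) else 0)"
    by (rule rep_kron) auto
  then show ?thesis unfolding AA_def kron_list_def using m
    by (simp del: foldr_replicate) (intro eq_matI, auto)
qed

lemma A1_mat: assumes "N \<ge> 2"
  shows "AA N 1 = mat (2^(N-1)) (2^(N-1)) (\<lambda>(i,j). if i div 2 + j div 2 = 2^(N-2) - 1 then sigma_y $$ (i mod 2, j mod 2) else 0)"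
proof -
  define k where "k = N - 2"
  have k: "N = k + 2" using assms unfolding k_def by simp
  have m1: "map (X' N) [1..<N-1] = replicate (N-2) sigma_x"
    by (rule nth_equalityI) (use assms in \<open>auto simp: X'_def\<close>)
  have u: "[1..<N] = [1..<N-1] @ [N-1]" unfolding k by simp
  have m: "map (X' N) [1..<N] = replicate (N-2) sigma_x @ [sigma_y]"
    unfolding u using m1 by (simp add: X'_def k)
  have p: "2^(N-2)*2 = (2::nat)^(N-1)" unfolding k by simp
  have r: "foldr kron (replicate (N-2) sigma_x) sigma_y = mat (2^(N-2)*2) (2^(N-2)*2)
    (\<lambda>(i,j). if i div 2 + j div 2 = 2^(N-2) - 1 then sigma_y $$ (i mod 2, j mod 2) else 0)"
    by (rule rep_kron) auto
  have "AA N 1 = foldr kron (replicate (N-2) sigma_x) sigma_y"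
  proof -
    have ko: "kron sigma_y (1\<^sub>m (Suc 0)) = sigma_y" using kron_one_right[of sigma_y] by simp
    show ?thesis unfolding AA_def kron_list_def using m by (simp del: foldr_replicate add: ko)
  qed
  then show ?thesis unfolding r p by simp
qed

lemma s2: "complex_of_real (sqrt 2) * complex_of_real (sqrt 2) = 2"
  by (simp only: of_real_mult[symmetric]) simp

lemma table0:
  fixes r s :: nat
  assumes "r < 4" "s < 4"
  shows "(if r div 2 + s div 2 = 1 then 1 else 0) * sigma_x $$ (r mod 2, s mod 2)
     - sigma_y $$ (r div 2, s div 2) * sigma_y $$ (r mod 2, s mod 2) =
    (if r + s = 3 \<and> (r = 0 \<or> r = 3) then 2 else (0::complex))"
proof -
  have r: "r = 0 \<or> r = 1 \<or> r = 2 \<or> r = 3" and s: "s = 0 \<or> s = 1 \<or> s = 2 \<or> s = 3" using assms by auto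
  show ?thesis using r s by (elim disjE) (simp_all add: sx_entry sy_entry)
qed

lemma table:
  fixes r s :: nat
  assumes "r < 4" "s < 4"
  defines "a0 \<equiv> (if r div 2 + s div 2 = 1 then 1 else 0) :: complex"
  defines "a1 \<equiv> sigma_y $$ (r div 2, s div 2)"
  defines "b0 \<equiv> 1 / complex_of_real (sqrt 2) * (sigma_x $$ (r mod 2, s mod 2) - sigma_y $$ (r mod 2, s mod 2))"
  defines "b1 \<equiv> 1 / complex_of_real (sqrt 2) * (sigma_x $$ (r mod 2, s mod 2) + sigma_y $$ (r mod 2, s mod 2))"
  shows "a0 * b0 + a0 * b1 + a1 * b0 + - (a1 * b1) =
    (if r + s = 3 \<and> (r = 0 \<or> r = 3) then complex_of_real (2 * sqrt 2) else 0)"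
proof -
  let ?q = "complex_of_real (sqrt 2)"
  let ?x = "sigma_x $$ (r mod 2, s mod 2)"
  let ?y = "sigma_y $$ (r mod 2, s mod 2)"
  have nz: "?q \<noteq> 0" by simp
  have e1: "b0 + b1 = ?q * ?x" unfolding b0_def b1_def using nz s2
    by (simp add: field_simps)
  have e2: "b0 - b1 = - (?q * ?y)" unfolding b0_def b1_def using nz s2
    by (simp add: field_simps)
  have "a0 * b0 + a0 * b1 + a1 * b0 + - (a1 * b1) = a0 * (b0 + b1) + a1 * (b0 - b1)"
    by (simp add: algebra_simps)
  also have "\<dots> = ?q * (a0 * ?x - a1 * ?y)" unfolding e1 e2 by (simp add: algebra_simps)
  also have "\<dots> = ?q * (if r + s = 3 \<and> (r = 0 \<or> r = 3) then 2 else 0)"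
    using table0[OF assms(1,2)] unfolding a0_def a1_def by simp
  also have "\<dots> = (if r + s = 3 \<and> (r = 0 \<or> r = 3) then complex_of_real (2 * sqrt 2) else 0)"
    by simp
  finally show ?thesis .
qed

lemma BB_carrier: "BB N b \<in> carrier_mat 2 2"
  by (auto simp: BB_def X_def X'_def)
lemma BB_dims[simp]: "dim_row (BB N b) = 2" "dim_col (BB N b) = 2"
  using BB_carrier[of N b] unfolding carrier_mat_def by blast+
lemma BB0_entry: "b < 2 \<Longrightarrow> c < 2 \<Longrightarrow> BB N 0 $$ (b,c) = 1 / complex_of_real (sqrt 2) * (sigma_x $$ (b,c) - sigma_y $$ (b,c))"
  by (simp add: BB_def X_def)
lemma BB1_entry: "b < 2 \<Longrightarrow> c < 2 \<Longrightarrow> BB N 1 $$ (b,c) = 1 / complex_of_real (sqrt 2) * (sigma_x $$ (b,c) + sigma_y $$ (b,c))"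
  by (simp add: BB_def X'_def)

lemma idx4: "(i::nat) div 2 = 2*(i div 4) + (i mod 4) div 2" "i div 2 div 2 = i div 4"
   "i div 2 mod 2 = i mod 4 div 2" "i mod 2 = i mod 4 mod 2"
proof -
  show b: "i div 2 div 2 = i div 4" by (simp add: div_mult2_eq)
  have "i mod (2*2) = 2 * (i div 2 mod 2) + i mod 2" by (rule mod_mult2_eq)
  then have m4: "i mod 4 = 2 * (i div 2 mod 2) + i mod 2" by simp
  show c: "i div 2 mod 2 = i mod 4 div 2" unfolding m4 by simp
  show "i mod 2 = i mod 4 mod 2" unfolding m4 by simp
  have "i div 2 = 2 * (i div 2 div 2) + i div 2 mod 2" by simp
  then show "i div 2 = 2*(i div 4) + (i mod 4) div 2" unfolding b c .
qed

lemma I_mat: assumes N: "N \<ge> 3"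
  shows "I_CHSH N = mat (2^N) (2^N) (\<lambda>(i,j). if j = 2^N - 1 - i \<and> (i mod 4 = 0 \<or> i mod 4 = 3)
     then complex_of_real (2 * sqrt 2) else 0)"
proof -
  define T where "T = (2::nat)^(N-2)"
  have T0: "T > 0" unfolding T_def by simp
  define k where "k = N - 3"
  have k: "N = k + 3" using N unfolding k_def by simp
  have P1: "(2::nat)^(N-1) = 2*T" unfolding T_def k by (simp add: power_add)
  have P0: "(2::nat)^N = 4*T" unfolding T_def k by (simp add: power_add)
  define P where "P = mat (2*T) (2*T) (\<lambda>(i,j). if i + j = 2*T - 1 then 1 else (0::complex))"
  define Q where "Q = mat (2*T) (2*T) (\<lambda>(i,j). if i div 2 + j div 2 = T - 1 then sigma_y $$ (i mod 2, j mod 2) else 0)"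
  define B0 where "B0 = (1 / complex_of_real (sqrt 2)) \<cdot>\<^sub>m (sigma_x - sigma_y)"
  define B1 where "B1 = (1 / complex_of_real (sqrt 2)) \<cdot>\<^sub>m (sigma_x + sigma_y)"
  have A0: "AA N 0 = P"
    using A0_mat[of N] N P1 unfolding P_def by simp
  have A1: "AA N 1 = Q"
    using A1_mat[of N] N P1 unfolding T_def Q_def by simp
  have BB0: "BB N 0 = B0" unfolding BB_def X_def B0_def by simp
  have BB1: "BB N 1 = B1" unfolding BB_def X'_def B1_def by simp
  have Ieq: "I_CHSH N = kron P B0 + kron P B1 + kron Q B0 + (-1) \<cdot>\<^sub>m kron Q B1"
    unfolding I_CHSH_def A0 A1 BB0 BB1 by (rule refl)
  have dP[simp]: "dim_row P = 2*T" "dim_col P = 2*T" "dim_row Q = 2*T" "dim_col Q = 2*T"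
    unfolding P_def Q_def by simp_all
  have dB[simp]: "dim_row B0 = 2" "dim_col B0 = 2" "dim_row B1 = 2" "dim_col B1 = 2"
    unfolding B0_def B1_def by simp_all
  have B0e: "\<And>b c. b < 2 \<Longrightarrow> c < 2 \<Longrightarrow> B0 $$ (b,c) = 1 / complex_of_real (sqrt 2) * (sigma_x $$ (b,c) - sigma_y $$ (b,c))"
    unfolding B0_def by simp
  have B1e: "\<And>b c. b < 2 \<Longrightarrow> c < 2 \<Longrightarrow> B1 $$ (b,c) = 1 / complex_of_real (sqrt 2) * (sigma_x $$ (b,c) + sigma_y $$ (b,c))"
    unfolding B1_def by simp
  show ?thesis unfolding P0
  proof (rule eq_matI)
    fix i j assume "i < dim_row (mat (4 * T) (4 * T) (\<lambda>(i, j). if j = 4 * T - 1 - i \<and> (i mod 4 = 0 \<or> i mod 4 = 3)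
        then complex_of_real (2 * sqrt 2) else 0))"
      "j < dim_col (mat (4 * T) (4 * T) (\<lambda>(i, j). if j = 4 * T - 1 - i \<and> (i mod 4 = 0 \<or> i mod 4 = 3)
        then complex_of_real (2 * sqrt 2) else 0))"
    then have i: "i < 4*T" and j: "j < 4*T" by auto
    define p where "p = i div 4"
    define q where "q = j div 4"
    define r where "r = i mod 4"
    define s where "s = j mod 4"
    have r4: "r < 4" "s < 4" unfolding r_def s_def by auto
    have ip: "i = 4*p + r" "j = 4*q+s" unfolding p_def q_def r_def s_def by simp_all
    have i2: "i div 2 < 2*T" "j div 2 < 2*T" using i j by auto
    have m2: "i mod 2 < 2" "j mod 2 < 2" by auto
    have rd: "r div 2 \<le> 1" "s div 2 \<le> 1" using r4 by auto
    have "I_CHSH N $$ (i,j) =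
      P $$ (i div 2, j div 2) * B0 $$ (i mod 2, j mod 2) +
      P $$ (i div 2, j div 2) * B1 $$ (i mod 2, j mod 2) +
      Q $$ (i div 2, j div 2) * B0 $$ (i mod 2, j mod 2) +
      - (Q $$ (i div 2, j div 2) * B1 $$ (i mod 2, j mod 2))"
      using i j unfolding Ieq by (simp add: kron_entry)
    also have "\<dots> = (if j = 4 * T - 1 - i \<and> (i mod 4 = 0 \<or> i mod 4 = 3)
        then complex_of_real (2 * sqrt 2) else 0)"
    proof (cases "p + q = T - 1")
      case True
      have c0: "(i div 2 + j div 2 = 2*T - 1) = (r div 2 + s div 2 = 1)"
        using True T0 r4 rd unfolding idx4(1)[of i] idx4(1)[of j] p_def[symmetric] q_def[symmetric] r_def[symmetric] s_def[symmetric]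
        by auto
      have c1: "i div 2 div 2 + j div 2 div 2 = T - 1" using True unfolding idx4(2) p_def q_def by simp
      have c2: "(j = 4 * T - 1 - i) = (r + s = 3)" using True ip T0 r4 by auto
      have Pe: "P $$ (i div 2, j div 2) = (if r div 2 + s div 2 = 1 then 1 else 0)"
        using i2 c0 unfolding P_def by simp
      have Qe: "Q $$ (i div 2, j div 2) = sigma_y $$ (r div 2, s div 2)"
        using i2 c1 unfolding Q_def by (simp add: idx4(3)[of i] idx4(3)[of j] r_def s_def)
      have be: "B0 $$ (i mod 2, j mod 2) = 1 / complex_of_real (sqrt 2) * (sigma_x $$ (r mod 2, s mod 2) - sigma_y $$ (r mod 2, s mod 2))"
        "B1 $$ (i mod 2, j mod 2) = 1 / complex_of_real (sqrt 2) * (sigma_x $$ (r mod 2, s mod 2) + sigma_y $$ (r mod 2, s mod 2))"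
        using B0e[OF m2] B1e[OF m2] unfolding idx4(4)[of i] idx4(4)[of j] r_def s_def by simp_all
      show ?thesis unfolding Pe Qe be table[OF r4] c2 r_def[symmetric] ..
    next
      case False
      have c0: "i div 2 + j div 2 \<noteq> 2*T - 1"
        using False T0 r4 rd unfolding idx4(1)[of i] idx4(1)[of j] p_def[symmetric] q_def[symmetric] r_def[symmetric] s_def[symmetric]
        by auto
      have c1: "i div 2 div 2 + j div 2 div 2 \<noteq> T - 1" using False unfolding idx4(2) p_def q_def by simp
      have c2: "j \<noteq> 4 * T - 1 - i"
      proof
        assume "j = 4 * T - 1 - i"
        then have "4 * (p + q) + (r + s) = 4 * T - 1" using ip i by simp
        then show False using False r4 T0 by presburger
      qed
      have Pe: "P $$ (i div 2, j div 2) = 0" using i2 c0 unfolding P_def by simp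
      have Qe: "Q $$ (i div 2, j div 2) = 0" using i2 c1 unfolding Q_def by simp
      show ?thesis unfolding Pe Qe using c2 by simp
    qed
    finally show "I_CHSH N $$ (i,j) = mat (4 * T) (4 * T) (\<lambda>(i, j). if j = 4 * T - 1 - i \<and> (i mod 4 = 0 \<or> i mod 4 = 3)
        then complex_of_real (2 * sqrt 2) else 0) $$ (i,j)" using i j by simp
  qed (simp_all add: Ieq)
qed

lemma I_carrier: "N \<ge> 3 \<Longrightarrow> I_CHSH N \<in> carrier_mat (2^N) (2^N)"
  by (simp add: I_mat)

lemma I_mult: assumes N: "N \<ge> 3" and v: "v \<in> carrier_vec (2^N)" and i: "i < 2^N"
  shows "(I_CHSH N *\<^sub>v v) $ i = (if i mod 4 = 0 \<or> i mod 4 = 3 then complex_of_real (2 * sqrt 2) * v $ (2^N - 1 - i) else 0)"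
proof -
  have "(I_CHSH N *\<^sub>v v) $ i = (\<Sum>j\<in>{0..<2^N}. (if j = 2^N - 1 - i \<and> (i mod 4 = 0 \<or> i mod 4 = 3)
     then complex_of_real (2 * sqrt 2) else 0) * v $ j)"
    using v i by (simp add: I_mat[OF N] scalar_prod_def)
  also have "\<dots> = (\<Sum>j\<in>{0..<2^N}. if j = 2^N - 1 - i then (if i mod 4 = 0 \<or> i mod 4 = 3
     then complex_of_real (2 * sqrt 2) * v $ j else 0) else 0)"
    by (rule sum.cong) auto
  also have "\<dots> = (if i mod 4 = 0 \<or> i mod 4 = 3 then complex_of_real (2 * sqrt 2) * v $ (2^N - 1 - i) else 0)"
    using i by (subst sum.delta) auto
  finally show ?thesis .
qed

lemma pow4: assumes "N \<ge> 3" shows "(2::nat)^N = 4 * 2^(N-2)"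
proof -
  define k where "k = N - 3"
  have k: "N = k + 3" using assms unfolding k_def by simp
  show ?thesis unfolding k by (simp add: power_add)
qed

lemma compl_mod: assumes "N \<ge> 3" "(i::nat) < 2^N"
  shows "(2^N - 1 - i) mod 4 = 3 - i mod 4" "2^N - 1 - (2^N - 1 - i) = i" "2^N - 1 - i < 2^N"
proof -
  define T where "T = (2::nat)^(N-2)"
  have T: "(2::nat)^N = 4*T" using pow4[OF assms(1)] unfolding T_def .
  define a where "a = i div 4"
  define b where "b = i mod 4"
  have ab: "i = 4*a + b" "b < 4" unfolding a_def b_def by simp_all
  have aT: "a < T" using assms(2) ab unfolding T by linarith
  have e: "4*T - 1 - i = (3 - b) + (T - 1 - a) * 4" using ab aT by linarith
  show "(2^N - 1 - i) mod 4 = 3 - i mod 4" unfolding T e b_def[symmetric] mod_mult_self1 using ab(2) by simp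
  show "2^N - 1 - (2^N - 1 - i) = i" "2^N - 1 - i < 2^N" using assms(2) by auto
qed

lemma c_sq: "complex_of_real (2 * sqrt 2) * complex_of_real (2 * sqrt 2) = 8"
proof -
  have "complex_of_real (2 * sqrt 2) * complex_of_real (2 * sqrt 2) = complex_of_real (4 * (sqrt 2 * sqrt 2))"
    by (simp only: of_real_mult[symmetric]) (simp add: algebra_simps)
  also have "\<dots> = 8" by simp
  finally show ?thesis .
qed

lemma ev_cases: assumes N: "N \<ge> 3" and ev: "eigenvalue (I_CHSH N) k"
  shows "k = 0 \<or> k = complex_of_real (2 * sqrt 2) \<or> k = - complex_of_real (2 * sqrt 2)"
proof -
  let ?c = "complex_of_real (2 * sqrt 2)"
  obtain v where v: "v \<in> carrier_vec (2^N)" "v \<noteq> 0\<^sub>v (2^N)" "I_CHSH N *\<^sub>v v = k \<cdot>\<^sub>v v"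
    using ev I_carrier[OF N] unfolding eigenvalue_def eigenvector_def by auto
  have "\<exists>i<2^N. v $ i \<noteq> 0"
  proof (rule ccontr)
    assume "\<not> (\<exists>i<2^N. v $ i \<noteq> 0)"
    then have "v = 0\<^sub>v (2^N)" using v(1) by (intro eq_vecI) auto
    with v(2) show False by simp
  qed
  then obtain i where i: "i < 2^N" "v $ i \<noteq> 0" by blast
  let ?i = "2^N - 1 - i"
  have E1: "(if i mod 4 = 0 \<or> i mod 4 = 3 then ?c * v $ ?i else 0) = k * v $ i"
    using arg_cong[OF v(3), of "\<lambda>w. w $ i"] I_mult[OF N v(1) i(1)] v(1) i(1) by simp
  have E2: "(if i mod 4 = 0 \<or> i mod 4 = 3 then ?c * v $ i else 0) = k * v $ ?i"
    using arg_cong[OF v(3), of "\<lambda>w. w $ ?i"] I_mult[OF N v(1) compl_mod(3)[OF N i(1)]] v(1)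
      compl_mod[OF N i(1)] by auto
  show ?thesis
  proof (cases "i mod 4 = 0 \<or> i mod 4 = 3")
    case False
    then show ?thesis using E1 i by auto
  next
    case True
    have "k * k * v $ i = ?c * ?c * v $ i"
    proof -
      have "k * k * v $ i = k * (?c * v $ ?i)" using E1 True by (simp add: mult.assoc)
      also have "\<dots> = ?c * (k * v $ ?i)" by (simp add: algebra_simps)
      also have "\<dots> = ?c * (?c * v $ i)" using E2 True by (simp only: if_True)
      also have "\<dots> = ?c * ?c * v $ i" by (simp only: mult.assoc)
      finally show ?thesis .
    qed
    then have "k * k = ?c * ?c" using i(2) by simp
    then have "(k - ?c) * (k + ?c) = 0" by (simp add: algebra_simps)
    then show ?thesis by (auto simp: eq_neg_iff_add_eq_0)
  qed
qed

lemma ghz_carrier: "ghz N \<in> carrier_vec (2^N)" by (simp add: ghz_def)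

lemma ghz_eig: assumes N: "N \<ge> 3"
  shows "I_CHSH N *\<^sub>v ghz N = complex_of_real (2 * sqrt 2) \<cdot>\<^sub>v ghz N"
proof (rule eq_vecI)
  fix i assume "i < dim_vec (complex_of_real (2 * sqrt 2) \<cdot>\<^sub>v ghz N)"
  then have i: "i < 2^N" by (simp add: ghz_def)
  have m0: "(2^N - 1::nat) mod 4 = 3" using compl_mod[OF N, of 0] by simp
  show "(I_CHSH N *\<^sub>v ghz N) $ i = (complex_of_real (2 * sqrt 2) \<cdot>\<^sub>v ghz N) $ i"
    unfolding I_mult[OF N ghz_carrier i] using i m0 compl_mod[OF N i] by (auto simp: ghz_def)
qed (simp add: I_mat[OF N] ghz_def)

lemma eigenspace_char: assumes N: "N \<ge> 3"
  shows "eigenspace (I_CHSH N) (complex_of_real (2 * sqrt 2)) =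
    {v \<in> carrier_vec (2^N). \<forall>i. (i::nat) < 2^N \<longrightarrow> v $ i = (if i mod 4 = 0 \<or> i mod 4 = 3 then v $ (2^N - 1 - i) else 0)}"
proof -
  let ?c = "complex_of_real (2 * sqrt 2)"
  have c0: "?c \<noteq> 0" by simp
  have "I_CHSH N *\<^sub>v v = ?c \<cdot>\<^sub>v v \<longleftrightarrow> (\<forall>i. (i::nat) < 2^N \<longrightarrow> v $ i = (if i mod 4 = 0 \<or> i mod 4 = 3 then v $ (2^N - 1 - i) else 0))"
    if v: "v \<in> carrier_vec (2^N)" for v
  proof
    assume H: "I_CHSH N *\<^sub>v v = ?c \<cdot>\<^sub>v v"
    show "\<forall>i. (i::nat) < 2^N \<longrightarrow> v $ i = (if i mod 4 = 0 \<or> i mod 4 = 3 then v $ (2^N - 1 - i) else 0)"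
    proof (intro allI impI)
      fix i :: nat assume i: "i < 2^N"
      have "(if i mod 4 = 0 \<or> i mod 4 = 3 then ?c * v $ (2^N - 1 - i) else 0) = ?c * v $ i"
        using arg_cong[OF H, of "\<lambda>w. w $ i"] I_mult[OF N v i] v i by simp
      then show "v $ i = (if i mod 4 = 0 \<or> i mod 4 = 3 then v $ (2^N - 1 - i) else 0)"
        using c0 by (auto split: if_splits)
    qed
  next
    assume H: "\<forall>i. (i::nat) < 2^N \<longrightarrow> v $ i = (if i mod 4 = 0 \<or> i mod 4 = 3 then v $ (2^N - 1 - i) else 0)"
    show "I_CHSH N *\<^sub>v v = ?c \<cdot>\<^sub>v v"
    proof (rule eq_vecI)
      fix i assume "i < dim_vec (?c \<cdot>\<^sub>v v)"
      then have i: "i < 2^N" using v by simp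
      show "(I_CHSH N *\<^sub>v v) $ i = (?c \<cdot>\<^sub>v v) $ i"
        unfolding I_mult[OF N v i] using H[rule_format, OF i] i v by auto
    qed (use v N in \<open>simp add: I_mat\<close>)
  qed
  then show ?thesis unfolding eigenspace_def using I_carrier[OF N] by auto
qed



fun msk :: "bool list \<Rightarrow> nat" where
  "msk [] = 0"
| "msk (b # bs) = (if b then 2 ^ length bs else 0) + msk bs"

lemma msk_lt: "msk bs < 2 ^ length bs"
  by (induction bs) auto

lemma msk_append: "msk (xs @ ys) = msk xs * 2 ^ length ys + msk ys"
  by (induction xs) (auto simp: power_add algebra_simps)

lemma one2_dims[simp]: "dim_row (1\<^sub>m 2 :: complex mat) = 2" "dim_col (1\<^sub>m 2 :: complex mat) = 2" by auto

lemma dig_eq: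
  fixes a c m x D :: nat
  assumes "a \<le> 1" "c \<le> 1" "m < D" "x < D"
  shows "(D*a + m = D*c + x) = (a = c \<and> m = x)"
proof -
  have "a = 0 \<or> a = 1" "c = 0 \<or> c = 1" using assms by auto
  then show ?thesis using assms by (elim disjE) auto
qed

lemma col_kron:
  fixes bs :: "bool list"
  defines "L \<equiv> kron_list (map (\<lambda>b. if b then sigma_x else 1\<^sub>m 2) bs)"
  shows "L \<in> carrier_mat (2 ^ length bs) (2 ^ length bs) \<and>
    (\<forall>i < 2 ^ length bs. L $$ (i, 0) = (if i = msk bs then 1 else 0)
       \<and> L $$ (i, 2 ^ length bs - 1) = (if i = 2 ^ length bs - 1 - msk bs then 1 else 0))"
  unfolding L_def
proof (induction bs)
  case Nil
  then show ?case by (auto simp: kron_list_def)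
next
  case (Cons b bs)
  define R where "R = kron_list (map (\<lambda>b. if b then sigma_x else 1\<^sub>m 2) bs)"
  define M where "M = (if b then sigma_x else 1\<^sub>m 2 :: complex mat)"
  define D where "D = (2::nat) ^ length bs"
  have D0: "D > 0" unfolding D_def by simp
  have R: "R \<in> carrier_mat D D" "\<And>i. i < D \<Longrightarrow> R $$ (i, 0) = (if i = msk bs then 1 else 0)"
    "\<And>i. i < D \<Longrightarrow> R $$ (i, D - 1) = (if i = D - 1 - msk bs then 1 else 0)"
    using Cons.IH unfolding R_def D_def by auto
  have mk: "msk bs < D" unfolding D_def by (rule msk_lt)
  have M: "M \<in> carrier_mat 2 2" unfolding M_def by auto
  have Me: "\<And>a c. a < 2 \<Longrightarrow> c < 2 \<Longrightarrow> M $$ (a, c) = (if b then (if a = c then 0 else 1) else (if a = c then 1 else 0))"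
    unfolding M_def by (auto simp: sx_entry)
  have eq: "kron_list (map (\<lambda>b. if b then sigma_x else 1\<^sub>m 2) (b # bs)) = kron M R"
    unfolding kron_list_def R_def M_def by simp
  have len: "2 ^ length (b # bs) = 2 * D" unfolding D_def by simp
  have ms: "msk (b # bs) = (if b then D else 0) + msk bs" unfolding D_def by simp
  show ?case unfolding eq len ms
  proof (intro conjI allI impI)
    have dM: "dim_row M = 2" "dim_col M = 2" "dim_row R = D" "dim_col R = D"
      using M R(1) by (simp_all add: carrier_matD)
    show "kron M R \<in> carrier_mat (2 * D) (2 * D)" by (rule carrier_matI) (simp_all add: dM)
  next
    fix i assume i: "i < 2 * D"
    define a where "a = i div D"
    define m where "m = i mod D"
    have a1: "a \<le> 1" using i less_mult_imp_div_less[of i 2 D] unfolding a_def by auto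
    have idec: "i = D * a + m" unfolding a_def m_def by simp
    have imod: "m < D" using D0 unfolding m_def by simp
    have e: "2 * D - 1 = (D - 1) + D" using D0 by simp
    have c1a: "((D - 1) + D) div D = (D - 1) div D + 1" by (rule div_add_self2) (use D0 in simp)
    have c1b: "((D - 1) + D) mod D = (D - 1) mod D" by (rule mod_add_self2)
    have c1: "(2 * D - 1) div D = 1" "(2 * D - 1) mod D = D - 1" unfolding e c1a c1b using D0 by simp_all
    have k0: "kron M R $$ (i, 0) = M $$ (a, 0) * R $$ (m, 0)"
      using i M R(1) D0 unfolding a_def m_def by (simp add: kron_entry)
    have k1: "kron M R $$ (i, 2 * D - 1) = M $$ (a, 1) * R $$ (m, D - 1)"
      using i M R(1) D0 c1 unfolding a_def m_def by (simp add: kron_entry)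
    have cb: "(if b then D else 0) + msk bs = D * (if b then 1 else 0) + msk bs" by simp
    have cb2: "2 * D - 1 - ((if b then D else 0) + msk bs) = D * (if b then 0 else 1) + (D - 1 - msk bs)"
      using mk by (cases b) auto
    have m1: "D - 1 - msk bs < D" using D0 by simp
    have a01: "a = 0 \<or> a = 1" using a1 by auto
    have m2: "D - 1 - msk bs < D" using D0 by simp
    have iff0: "(i = (if b then D else 0) + msk bs) \<longleftrightarrow> (a = (if b then 1 else 0) \<and> m = msk bs)"
      unfolding cb by (subst idec) (rule dig_eq, use a1 imod mk in auto)
    have iff1: "(i = 2 * D - 1 - ((if b then D else 0) + msk bs)) \<longleftrightarrow> (a = (if b then 0 else 1) \<and> m = D - 1 - msk bs)"
      unfolding cb2 by (subst idec) (rule dig_eq, use a1 imod m2 in auto)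
    have Ma: "M $$ (a, 0) = (if b then (if a = 0 then 0 else 1) else (if a = 0 then 1 else 0))"
      "M $$ (a, 1) = (if b then (if a = 1 then 0 else 1) else (if a = 1 then 1 else 0))"
      using Me a1 by auto
    show "kron M R $$ (i, 0) = (if i = (if b then D else 0) + msk bs then 1 else 0)"
      unfolding k0 iff0 Ma R(2)[OF imod] using a01 by (cases b) auto
    show "kron M R $$ (i, 2 * D - 1) = (if i = 2 * D - 1 - ((if b then D else 0) + msk bs) then 1 else 0)"
      unfolding k1 iff1 Ma R(3)[OF imod] using a01 by (cases b) auto
  qed
qed

definition bvec :: "nat \<Rightarrow> nat \<Rightarrow> complex vec" where
  "bvec N m = vec (2^N) (\<lambda>j. if j = m \<or> j = 2^N - 1 - m then complex_of_real (1 / sqrt 2) else 0)"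

lemma kron_ghz:
  assumes N: "N \<ge> 1" and len: "length bs = N"
  shows "kron_list (map (\<lambda>b. if b then sigma_x else 1\<^sub>m 2) bs) *\<^sub>v ghz N =
    vec (2^N) (\<lambda>i. (if i = msk bs then complex_of_real (1 / sqrt 2) else 0)
        + (if i = 2^N - 1 - msk bs then complex_of_real (1 / sqrt 2) else 0))"
proof -
  let ?L = "kron_list (map (\<lambda>b. if b then sigma_x else 1\<^sub>m 2) bs)"
  let ?h = "complex_of_real (1 / sqrt 2)"
  have L: "?L \<in> carrier_mat (2^N) (2^N)"
    and Le: "\<And>i. i < 2^N \<Longrightarrow> ?L $$ (i, 0) = (if i = msk bs then 1 else 0)
       \<and> ?L $$ (i, 2^N - 1) = (if i = 2^N - 1 - msk bs then 1 else 0)"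
    using col_kron[of bs] len by auto
  have "(2::nat)^1 \<le> 2^N" using N by (intro power_increasing) auto
  then have n1: "(0::nat) \<noteq> 2^N - 1" by simp
  show ?thesis
  proof (rule eq_vecI)
    fix i assume "i < dim_vec (vec (2^N) (\<lambda>i. (if i = msk bs then ?h else 0) + (if i = 2^N - 1 - msk bs then ?h else 0)))"
    then have i: "i < 2^N" by simp
    have "(?L *\<^sub>v ghz N) $ i = (\<Sum>j\<in>{0..<2^N}. ?L $$ (i, j) * ghz N $ j)"
      using L i by (simp add: scalar_prod_def ghz_def)
    also have "\<dots> = (\<Sum>j\<in>{0..<2^N}. (if j = 0 then ?L $$ (i, j) * ?h else 0) + (if j = 2^N - 1 then ?L $$ (i, j) * ?h else 0))"
      by (rule sum.cong) (use n1 in \<open>auto simp: ghz_def\<close>)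
    also have "\<dots> = ?L $$ (i, 0) * ?h + ?L $$ (i, 2^N - 1) * ?h"
      by (simp add: sum.distrib)
    also have "\<dots> = (if i = msk bs then ?h else 0) + (if i = 2^N - 1 - msk bs then ?h else 0)"
      using Le[OF i] by simp
    finally show "(?L *\<^sub>v ghz N) $ i = vec (2^N) (\<lambda>i. (if i = msk bs then ?h else 0) + (if i = 2^N - 1 - msk bs then ?h else 0)) $ i"
      using i by simp
  qed (use L in simp)
qed

lemma msk_range: "x < 2^m \<Longrightarrow> \<exists>K. K \<subseteq> {a..<a+m} \<and> msk (map (\<lambda>k. k \<in> K) [a..<a+m]) = x"
proof (induction m arbitrary: a x)
  case 0
  then show ?case by auto
next
  case (Suc m)
  have u: "[a..<a + Suc m] = a # [Suc a..<Suc a + m]" by (simp add: upt_conv_Cons del: upt_Suc)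
  have step: "\<And>f. msk (map f [a..<a + Suc m]) = (if f a then 2^m else 0) + msk (map f [Suc a..<Suc a + m])"
    unfolding u by (simp del: upt_Suc)
  have len: "length [Suc a..<Suc a + m] = m" by simp
  show ?case
  proof (cases "x < 2^m")
    case True
    from Suc.IH[OF True, of "Suc a"] obtain K where K: "K \<subseteq> {Suc a..<Suc a + m}"
      "msk (map (\<lambda>k. k \<in> K) [Suc a..<Suc a + m]) = x" by blast
    have "a \<notin> K" using K(1) by auto
    then have "msk (map (\<lambda>k. k \<in> K) [a..<a + Suc m]) = x" unfolding step using K(2) by simp
    moreover have "K \<subseteq> {a..<a + Suc m}" using K(1) by auto
    ultimately show ?thesis by blast
  next
    case False
    have x': "x - 2^m < 2^m" using Suc.prems False by simp
    from Suc.IH[OF x', of "Suc a"] obtain K where K: "K \<subseteq> {Suc a..<Suc a + m}"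
      "msk (map (\<lambda>k. k \<in> K) [Suc a..<Suc a + m]) = x - 2^m" by blast
    have m: "map (\<lambda>k. k \<in> insert a K) [Suc a..<Suc a + m] = map (\<lambda>k. k \<in> K) [Suc a..<Suc a + m]"
      by (rule map_cong) auto
    have "msk (map (\<lambda>k. k \<in> insert a K) [a..<a + Suc m]) = 2^m + (x - 2^m)"
      unfolding step m K(2) by simp
    also have "\<dots> = x" using False by simp
    finally have "msk (map (\<lambda>k. k \<in> insert a K) [a..<a + Suc m]) = x" .
    moreover have "insert a K \<subseteq> {a..<a + Suc m}" using K(1) by auto
    ultimately show ?thesis by blast
  qed
qed

lemma upt_split3: assumes "N \<ge> 3" shows "[1..<N+1] = [1..<N-1] @ [N-1, N]"
proof -
  define k where "k = N - 3"
  have k: "N = Suc (Suc (Suc k))" using assms unfolding k_def by simp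
  show ?thesis unfolding k by simp
qed

lemma mskK: assumes N: "N \<ge> 3" and K: "K \<subseteq> {1..N-2}"
  shows "msk (map (\<lambda>k. k \<in> K) [1..<N+1]) = 4 * msk (map (\<lambda>k. k \<in> K) [1..<N-1])"
proof -
  have "N - 1 \<notin> {1..N-2}" "N \<notin> {1..N-2}" using N by auto
  then have "N - 1 \<notin> K" "N \<notin> K" using K by blast+
  then show ?thesis unfolding upt_split3[OF N] by (simp add: msk_append)
qed

lemma sxon_ghz: assumes N: "N \<ge> 3" and K: "K \<subseteq> {1..N-2}"
  shows "sigma_x_on N K *\<^sub>v ghz N = bvec N (msk (map (\<lambda>k. k \<in> K) [1..<N+1]))"
    "msk (map (\<lambda>k. k \<in> K) [1..<N+1]) mod 4 = 0"
    "msk (map (\<lambda>k. k \<in> K) [1..<N+1]) < 2^N"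
proof -
  let ?bs = "map (\<lambda>k. k \<in> K) [1..<N+1]"
  show m4: "msk ?bs mod 4 = 0" unfolding mskK[OF N K] by simp
  have len: "length ?bs = N" by simp
  have N1: "1 \<le> N" using N by simp
  show lt: "msk ?bs < 2^N" using msk_lt[of ?bs] len by simp
  have eq: "sigma_x_on N K = kron_list (map (\<lambda>b. if b then sigma_x else 1\<^sub>m 2) ?bs)"
    unfolding sigma_x_on_def by (simp add: comp_def)
  have ne: "\<And>i. \<not> (i = msk ?bs \<and> i = 2^N - 1 - msk ?bs)"
    using compl_mod(1)[OF N lt] m4 by auto
  show "sigma_x_on N K *\<^sub>v ghz N = bvec N (msk ?bs)"
    unfolding eq kron_ghz[OF N1 len]
  proof (intro eq_vecI)
    fix i assume "i < dim_vec (bvec N (msk ?bs))"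
    then show "vec (2 ^ N) (\<lambda>i. (if i = msk ?bs then complex_of_real (1 / sqrt 2) else 0) +
        (if i = 2 ^ N - 1 - msk ?bs then complex_of_real (1 / sqrt 2) else 0)) $ i = bvec N (msk ?bs) $ i"
      using ne[of i] by (auto simp: bvec_def)
  qed (simp add: bvec_def)
qed

lemma gen_set: assumes N: "N \<ge> 3"
  shows "{sigma_x_on N K *\<^sub>v ghz N | K. K \<subseteq> {1..N-2}} = bvec N ` {i. i < 2^N \<and> i mod 4 = 0}"
proof
  show "{sigma_x_on N K *\<^sub>v ghz N | K. K \<subseteq> {1..N-2}} \<subseteq> bvec N ` {i. i < 2^N \<and> i mod 4 = 0}"
  proof
    fix v assume "v \<in> {sigma_x_on N K *\<^sub>v ghz N | K. K \<subseteq> {1..N-2}}"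
    then obtain K where K: "K \<subseteq> {1..N-2}" and v: "v = sigma_x_on N K *\<^sub>v ghz N" by auto
    let ?m = "msk (map (\<lambda>k. k \<in> K) [1..<N+1])"
    have "?m \<in> {i. i < 2^N \<and> i mod 4 = 0}" using sxon_ghz(2,3)[OF N K] by simp
    moreover have "v = bvec N ?m" using sxon_ghz(1)[OF N K] v by simp
    ultimately show "v \<in> bvec N ` {i. i < 2^N \<and> i mod 4 = 0}" by (rule rev_image_eqI)
  qed
next
  show "bvec N ` {i. i < 2^N \<and> i mod 4 = 0} \<subseteq> {sigma_x_on N K *\<^sub>v ghz N | K. K \<subseteq> {1..N-2}}"
  proof
    fix v assume "v \<in> bvec N ` {i. i < 2^N \<and> i mod 4 = 0}"
    then obtain i where i0: "i \<in> {i. i < 2^N \<and> i mod 4 = 0}" and v: "v = bvec N i" by (rule imageE)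
    from i0 have i: "i < 2^N" "i mod 4 = 0" by simp_all
    have "i < 2^(N-2) * 4" using i(1) pow4[OF N] by simp
    then have x: "i div 4 < 2^(N-2)" by (rule less_mult_imp_div_less)
    obtain K where K: "K \<subseteq> {1..<1+(N-2)}" "msk (map (\<lambda>k. k \<in> K) [1..<1+(N-2)]) = i div 4"
      using msk_range[OF x, of 1] by blast
    have e: "1 + (N - 2) = N - 1" using N by simp
    have K': "K \<subseteq> {1..N-2}" using K(1) by (simp add: atLeastLessThanSuc_atLeastAtMost)
    have "msk (map (\<lambda>k. k \<in> K) [1..<N+1]) = 4 * (i div 4)" unfolding mskK[OF N K'] using K(2) unfolding e by simp
    also have "\<dots> = i" using div_mult_mod_eq[of i 4] i(2) by (simp add: mult.commute)
    finally have "msk (map (\<lambda>k. k \<in> K) [1..<N+1]) = i" .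
    then have "v = sigma_x_on N K *\<^sub>v ghz N" using sxon_ghz(1)[OF N K'] v by simp
    then show "v \<in> {sigma_x_on N K *\<^sub>v ghz N | K. K \<subseteq> {1..N-2}}" using K' by (intro CollectI exI[of _ K] conjI) auto
  qed
qed

definition Sset :: "nat \<Rightarrow> nat set" where "Sset N = {i. i < 2^N \<and> i mod 4 = 0}"

lemma bvec_carrier: "bvec N m \<in> carrier_vec (2^N)" by (simp add: bvec_def)

lemma bvec_index: "j < 2^N \<Longrightarrow> bvec N m $ j = (if j = m \<or> j = 2^N - 1 - m then complex_of_real (1 / sqrt 2) else 0)"
  by (simp add: bvec_def)

lemma Sset_finite: "finite (Sset N)" unfolding Sset_def by simp

lemma Sset_not: assumes N: "N \<ge> 3" and m: "m \<in> Sset N" and j: "j < 2^N"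
  shows "j = 2^N - 1 - m \<longleftrightarrow> m = 2^N - 1 - j" "m \<noteq> 2^N - 1 - m" "2^N - 1 - m < 2^N"
proof -
  have m': "m < 2^N" "m mod 4 = 0" using m unfolding Sset_def by auto
  show "j = 2^N - 1 - m \<longleftrightarrow> m = 2^N - 1 - j" using m'(1) j by auto
  show "m \<noteq> 2^N - 1 - m" using compl_mod(1)[OF N m'(1)] m'(2) by auto
  show "2^N - 1 - m < 2^N" using m'(1) by auto
qed

lemma bvec_in_E: assumes N: "N \<ge> 3" and m: "m \<in> Sset N" and i: "i < 2^N"
  shows "bvec N m $ i = (if i mod 4 = 0 \<or> i mod 4 = 3 then bvec N m $ (2^N - 1 - i) else 0)"
proof -
  have m': "m < 2^N" "m mod 4 = 0" using m unfolding Sset_def by auto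
  have c: "(2^N - 1 - i) mod 4 = 3 - i mod 4" "2^N - 1 - (2^N - 1 - i) = i" "2^N - 1 - i < 2^N"
    using compl_mod[OF N i] by auto
  have cm: "(2^N - 1 - m) mod 4 = 3" using compl_mod(1)[OF N m'(1)] m'(2) by simp
  show ?thesis
  proof (cases "i mod 4 = 0 \<or> i mod 4 = 3")
    case True
    have "(i = m \<or> i = 2^N - 1 - m) \<longleftrightarrow> (2^N - 1 - i = m \<or> 2^N - 1 - i = 2^N - 1 - m)"
      using i m'(1) by auto
    then show ?thesis using True i c(3) by (simp add: bvec_index)
  next
    case False
    have "i \<noteq> m" "i \<noteq> 2^N - 1 - m" using False m'(2) cm by auto
    then show ?thesis using False i by (simp add: bvec_index)
  qed
qed

lemma bvec_sum: assumes N: "N \<ge> 3" and i: "i < 2^N"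
  shows "(\<Sum>m\<in>Sset N. f m * bvec N m $ i) =
    (if i \<in> Sset N then f i * complex_of_real (1 / sqrt 2) else 0)
    + (if 2^N - 1 - i \<in> Sset N then f (2^N - 1 - i) * complex_of_real (1 / sqrt 2) else 0)"
proof -
  let ?h = "complex_of_real (1 / sqrt 2)"
  have "(\<Sum>m\<in>Sset N. f m * bvec N m $ i) =
     (\<Sum>m\<in>Sset N. (if m = i then f m * ?h else 0) + (if m = 2^N - 1 - i then f m * ?h else 0))"
  proof (rule sum.cong)
    fix m assume m: "m \<in> Sset N"
    have e1: "i = 2^N - 1 - m \<longleftrightarrow> m = 2^N - 1 - i" "m \<noteq> 2^N - 1 - m" using Sset_not[OF N m i] by auto
    show "f m * bvec N m $ i = (if m = i then f m * ?h else 0) + (if m = 2^N - 1 - i then f m * ?h else 0)"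
      using e1 i by (auto simp: bvec_index)
  qed simp
  also have "\<dots> = (if i \<in> Sset N then f i * ?h else 0) + (if 2^N - 1 - i \<in> Sset N then f (2^N - 1 - i) * ?h else 0)"
    by (simp add: sum.distrib Sset_finite)
  finally show ?thesis .
qed

lemma bvec_inj: assumes N: "N \<ge> 3" shows "inj_on (bvec N) (Sset N)"
proof
  fix m m' assume m: "m \<in> Sset N" and m': "m' \<in> Sset N" and e: "bvec N m = bvec N m'"
  have ml: "m < 2^N" using m unfolding Sset_def by auto
  have "bvec N m $ m \<noteq> 0" using ml by (simp add: bvec_index)
  then have "bvec N m' $ m \<noteq> 0" using e by simp
  then have "m = m' \<or> m = 2^N - 1 - m'" using ml by (simp add: bvec_index split: if_splits)
  moreover have "m \<noteq> 2^N - 1 - m'"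
  proof
    assume h: "m = 2^N - 1 - m'"
    have "m' < 2^N" "m' mod 4 = 0" "m mod 4 = 0" using m m' unfolding Sset_def by auto
    then show False using h compl_mod(1)[OF N, of m'] by simp
  qed
  ultimately show "m = m'" by simp
qed

lemma card_Sset: assumes N: "N \<ge> 3" shows "card (Sset N) = 2^(N-2)"
proof -
  have "Sset N = (\<lambda>x. 4 * x) ` {..<2^(N-2)}"
  proof
    show "Sset N \<subseteq> (\<lambda>x. 4 * x) ` {..<2^(N-2)}"
    proof
      fix i assume "i \<in> Sset N"
      then have i: "i < 2^N" "i mod 4 = 0" unfolding Sset_def by auto
      have "i < 2^(N-2) * 4" using i(1) pow4[OF N] by simp
      then have x: "i div 4 < 2^(N-2)" by (rule less_mult_imp_div_less)
      have "i = 4 * (i div 4)" using div_mult_mod_eq[of i 4] i(2) by (simp add: mult.commute)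
      then show "i \<in> (\<lambda>x. 4 * x) ` {..<2^(N-2)}" using x by (intro rev_image_eqI[of "i div 4"]) auto
    qed
    show "(\<lambda>x. 4 * x) ` {..<2^(N-2)} \<subseteq> Sset N"
      using pow4[OF N] unfolding Sset_def by auto
  qed
  moreover have "inj_on (\<lambda>x::nat. 4 * x) {..<2^(N-2)}" by (rule inj_onI) simp
  ultimately show ?thesis by (simp add: card_image)
qed

lemma span_eq: assumes N: "N \<ge> 3"
  shows "module.span class_ring (module_vec TYPE(complex) (2 ^ N)) (bvec N ` Sset N)
    = eigenspace (I_CHSH N) (complex_of_real (2 * sqrt 2))"
proof -
  interpret V: vec_space "TYPE(complex)" "2^N" .
  let ?B = "bvec N ` Sset N"
  let ?P = "\<lambda>v. \<forall>i. (i::nat) < 2^N \<longrightarrow> v $ i = (if i mod 4 = 0 \<or> i mod 4 = 3 then v $ (2^N - 1 - i) else 0)"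
  have Bc: "?B \<subseteq> carrier_vec (2^N)" using bvec_carrier by auto
  have Bf: "finite ?B" using Sset_finite by simp
  show ?thesis unfolding eigenspace_char[OF N]
  proof
    show "V.span ?B \<subseteq> {v \<in> carrier_vec (2^N). ?P v}"
    proof
      fix v assume v: "v \<in> V.span ?B"
      obtain a A where A: "v = V.lincomb a A" "finite A" "A \<subseteq> ?B" using V.in_spanE[OF v] by blast
      have Ac: "A \<subseteq> carrier_vec (2^N)" using A(3) Bc by auto
      have vc: "v \<in> carrier_vec (2^N)" using A(1) V.lincomb_closed[OF Ac] by auto
      have "?P v"
      proof (intro allI impI)
        fix i :: nat assume i: "i < 2^N"
        have ci: "2^N - 1 - i < 2^N" using i by auto
        have ex: "\<And>x. x \<in> A \<Longrightarrow> x $ i = (if i mod 4 = 0 \<or> i mod 4 = 3 then x $ (2^N - 1 - i) else 0)"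
          using A(3) bvec_in_E[OF N _ i] by auto
        show "v $ i = (if i mod 4 = 0 \<or> i mod 4 = 3 then v $ (2^N - 1 - i) else 0)"
          unfolding A(1) V.lincomb_index[OF i Ac] V.lincomb_index[OF ci Ac]
          using ex by (auto intro: sum.cong)
      qed
      then show "v \<in> {v \<in> carrier_vec (2^N). ?P v}" using vc by simp
    qed
  next
    show "{v \<in> carrier_vec (2^N). ?P v} \<subseteq> V.span ?B"
    proof
      fix v :: "complex vec" assume "v \<in> {v \<in> carrier_vec (2^N). ?P v}"
      then have vc: "v \<in> carrier_vec (2^N)" and P: "?P v" by auto
      define a where "a = (\<lambda>x. complex_of_real (sqrt 2) * v $ (inv_into (Sset N) (bvec N) x))"
      have av: "\<And>m. m \<in> Sset N \<Longrightarrow> a (bvec N m) = complex_of_real (sqrt 2) * v $ m"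
        unfolding a_def using inv_into_f_f[OF bvec_inj[OF N]] by simp
      have hh: "complex_of_real (sqrt 2) * complex_of_real (1 / sqrt 2) = 1"
        by (simp only: of_real_mult[symmetric]) simp
      have "v = V.lincomb a ?B"
      proof (rule eq_vecI)
        fix i assume "i < dim_vec (V.lincomb a ?B)"
        then have i: "i < 2^N" using V.lincomb_dim[OF Bf Bc] by simp
        have ci: "2^N - 1 - i < 2^N" "2^N - 1 - (2^N - 1 - i) = i" "(2^N - 1 - i) mod 4 = 3 - i mod 4"
          using compl_mod[OF N i] by auto
        have "V.lincomb a ?B $ i = (\<Sum>x\<in>?B. a x * x $ i)" by (rule V.lincomb_index[OF i Bc])
        also have "\<dots> = (\<Sum>m\<in>Sset N. a (bvec N m) * bvec N m $ i)"
          by (rule sum.reindex_cong[OF bvec_inj[OF N] refl]) simp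
        also have "\<dots> = (\<Sum>m\<in>Sset N. (complex_of_real (sqrt 2) * v $ m) * bvec N m $ i)"
          by (rule sum.cong) (simp_all add: av)
        also have "\<dots> = (if i \<in> Sset N then v $ i else 0)
           + (if 2^N - 1 - i \<in> Sset N then v $ (2^N - 1 - i) else 0)"
          unfolding bvec_sum[OF N i] using hh by (simp add: algebra_simps)
        also have "\<dots> = v $ i"
          using P[rule_format, OF i] i ci unfolding Sset_def by auto
        finally show "v $ i = V.lincomb a ?B $ i" by simp
      qed (use vc V.lincomb_dim[OF Bf Bc] in simp)
      then show "v \<in> V.span ?B" using Bf by (intro V.in_spanI[of v a ?B]) auto
    qed
  qed
qed

lemma lin_indpt_B: assumes N: "N \<ge> 3"
  shows "\<not> module.lin_dep class_ring (module_vec TYPE(complex) (2 ^ N)) (bvec N ` Sset N)"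
proof -
  interpret V: vec_space "TYPE(complex)" "2^N" .
  let ?B = "bvec N ` Sset N"
  have Bc: "?B \<subseteq> carrier_vec (2^N)" using bvec_carrier by auto
  have Bf: "finite ?B" using Sset_finite by simp
  have key: "\<forall>v\<in>?B. a v = 0" if z: "V.lincomb a ?B = 0\<^sub>v (2^N)" for a
    proof
      fix v assume "v \<in> ?B"
      then obtain m where m: "m \<in> Sset N" and v: "v = bvec N m" by blast
      have ml: "m < 2^N" "m mod 4 = 0" using m unfolding Sset_def by auto
      have cm: "(2^N - 1 - m) mod 4 = 3" using compl_mod(1)[OF N ml(1)] ml(2) by simp
      have "0 = V.lincomb a ?B $ m" using z ml by simp
      also have "\<dots> = (\<Sum>x\<in>?B. a x * x $ m)" by (rule V.lincomb_index[OF ml(1) Bc])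
      also have "\<dots> = (\<Sum>m'\<in>Sset N. a (bvec N m') * bvec N m' $ m)"
        by (rule sum.reindex_cong[OF bvec_inj[OF N] refl]) simp
      also have "\<dots> = a (bvec N m) * complex_of_real (1 / sqrt 2)"
        unfolding bvec_sum[OF N ml(1)] using m cm unfolding Sset_def by auto
      finally show "a v = 0" using v by simp
    qed
  have "V.lin_indpt ?B"
    apply (rule V.finite_lin_indpt2[OF Bf Bc])
    subgoal for a using key[of a] by simp
    done
  then show ?thesis by simp
qed

lemma char_mult: assumes A: "A \<in> carrier_mat n n" and v: "v \<in> carrier_vec n"
  shows "char_matrix A e *\<^sub>v v = A *\<^sub>v v + (-e) \<cdot>\<^sub>v v"
  unfolding char_matrix_def
  by (rule eq_vecI, insert v A, auto simp: add_scalar_prod_distrib[of _ n])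

lemma kernel_eq: assumes N: "N \<ge> 3"
  shows "mat_kernel (char_matrix (I_CHSH N) (complex_of_real (2 * sqrt 2))) = eigenspace (I_CHSH N) (complex_of_real (2 * sqrt 2))"
proof -
  let ?c = "complex_of_real (2 * sqrt 2)"
  let ?C = "char_matrix (I_CHSH N) ?c"
  have I: "I_CHSH N \<in> carrier_mat (2^N) (2^N)" by (rule I_carrier[OF N])
  have Cc: "?C \<in> carrier_mat (2^N) (2^N)" using I by simp
  have iff: "(?C *\<^sub>v v = 0\<^sub>v (2^N)) = (I_CHSH N *\<^sub>v v = ?c \<cdot>\<^sub>v v)" if v: "v \<in> carrier_vec (2^N)" for v
  proof -
    have e: "?C *\<^sub>v v = I_CHSH N *\<^sub>v v + (-?c) \<cdot>\<^sub>v v" by (rule char_mult[OF I v])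
    show ?thesis
    proof
      assume h: "?C *\<^sub>v v = 0\<^sub>v (2^N)"
      show "I_CHSH N *\<^sub>v v = ?c \<cdot>\<^sub>v v"
      proof (rule eq_vecI)
        fix i assume "i < dim_vec (?c \<cdot>\<^sub>v v)"
        then have i: "i < 2^N" using v by simp
        have "(?C *\<^sub>v v) $ i = 0" using h i by simp
        then show "(I_CHSH N *\<^sub>v v) $ i = (?c \<cdot>\<^sub>v v) $ i" unfolding e using i v I by simp
      qed (use v I in simp)
    next
      assume h: "I_CHSH N *\<^sub>v v = ?c \<cdot>\<^sub>v v"
      show "?C *\<^sub>v v = 0\<^sub>v (2^N)"
      proof (rule eq_vecI)
        fix i assume "i < dim_vec (0\<^sub>v (2^N) :: complex vec)"
        then have i: "i < 2^N" by simp
        have "(I_CHSH N *\<^sub>v v) $ i = ?c * v $ i" using h i v by simp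
        then show "(?C *\<^sub>v v) $ i = (0\<^sub>v (2^N) :: complex vec) $ i" unfolding e using i v I by simp
      qed (use v Cc in simp)
    qed
  qed
  show ?thesis unfolding mat_kernel[OF Cc] eigenspace_def using I iff by auto
qed

lemma dim_eq: assumes N: "N \<ge> 3"
  shows "dim_gen_eigenspace (I_CHSH N) (complex_of_real (2 * sqrt 2)) 1 = 2 ^ (N - 2)"
proof -
  let ?c = "complex_of_real (2 * sqrt 2)"
  let ?C = "char_matrix (I_CHSH N) ?c"
  let ?B = "bvec N ` Sset N"
  have I: "I_CHSH N \<in> carrier_mat (2^N) (2^N)" by (rule I_carrier[OF N])
  have Cc: "?C \<in> carrier_mat (2^N) (2^N)" using I by simp
  have pw: "?C ^\<^sub>m 1 = ?C" using Cc by simp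
  interpret K: kernel "2^N" "2^N" ?C by (unfold_locales) (rule Cc)
  have Bf: "finite ?B" using Sset_finite by simp
  have Bsub: "?B \<subseteq> mat_kernel ?C"
  proof
    fix x assume "x \<in> ?B"
    then obtain m where m: "m \<in> Sset N" and x: "x = bvec N m" by blast
    have "x \<in> eigenspace (I_CHSH N) ?c" unfolding eigenspace_char[OF N] x
      using bvec_carrier bvec_in_E[OF N m] by auto
    then show "x \<in> mat_kernel ?C" using kernel_eq[OF N] by simp
  qed
  have li: "\<not> K.lin_dep ?B" unfolding K.lindep_same[OF Bsub] using lin_indpt_B[OF N] by simp
  have sp: "K.span ?B = mat_kernel ?C" unfolding K.span_same[OF Bsub] using span_eq[OF N] kernel_eq[OF N] by simp
  have bas: "K.basis ?B" unfolding K.Ker.basis_def using li sp Bsub by simp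
  have "kernel_dim ?C = card ?B" using K.kernel_dim K.Ker.dim_basis[OF Bf bas] by simp
  also have "\<dots> = 2^(N-2)" using card_image[OF bvec_inj[OF N]] card_Sset[OF N] by simp
  finally show ?thesis unfolding dim_gen_eigenspace_def pw .
qed

theorem mainTheorem6:
  fixes N :: nat
  assumes "N \<ge> 3"
  defines "lam \<equiv> complex_of_real (2 * sqrt 2)"
  shows "eigenvalue (I_CHSH N) lam
    \<and> (\<forall>k. eigenvalue (I_CHSH N) k \<longrightarrow> k \<in> \<real> \<and> Re k \<le> Re lam)
    \<and> eigenvector (I_CHSH N) (ghz N) lam
    \<and> dim_gen_eigenspace (I_CHSH N) lam 1 = 2 ^ (N - 2)
    \<and> eigenspace (I_CHSH N) lam
        = module.span class_ring (module_vec TYPE(complex) (2 ^ N))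
            {sigma_x_on N K *\<^sub>v ghz N | K. K \<subseteq> {1..N-2}}"
proof -
  note N = assms(1)
  have I: "I_CHSH N \<in> carrier_mat (2^N) (2^N)" by (rule I_carrier[OF N])
  have g0: "ghz N $ 0 \<noteq> 0" by (simp add: ghz_def)
  have gnz: "ghz N \<noteq> 0\<^sub>v (2^N)"
  proof
    assume "ghz N = 0\<^sub>v (2^N)"
    then have "ghz N $ 0 = 0" by simp
    with g0 show False by simp
  qed
  have ev: "eigenvector (I_CHSH N) (ghz N) lam"
    unfolding eigenvector_def lam_def using I ghz_carrier gnz ghz_eig[OF N] by simp
  have eval: "eigenvalue (I_CHSH N) lam" unfolding eigenvalue_def using ev by blast
  have bound: "\<forall>k. eigenvalue (I_CHSH N) k \<longrightarrow> k \<in> \<real> \<and> Re k \<le> Re lam"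
  proof (intro allI impI)
    fix k assume "eigenvalue (I_CHSH N) k"
    then have "k = 0 \<or> k = lam \<or> k = - lam" using ev_cases[OF N] unfolding lam_def by blast
    moreover have "lam \<in> \<real>" "Re lam = 2 * sqrt 2" unfolding lam_def by simp_all
    moreover have "(0::real) \<le> 2 * sqrt 2" by simp
    ultimately show "k \<in> \<real> \<and> Re k \<le> Re lam" by auto
  qed
  have dim: "dim_gen_eigenspace (I_CHSH N) lam 1 = 2 ^ (N - 2)" unfolding lam_def by (rule dim_eq[OF N])
  have sp: "eigenspace (I_CHSH N) lam = module.span class_ring (module_vec TYPE(complex) (2 ^ N))
            {sigma_x_on N K *\<^sub>v ghz N | K. K \<subseteq> {1..N-2}}"
    unfolding gen_set[OF N] lam_def span_eq[OF N, unfolded Sset_def] ..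
  show ?thesis using eval bound ev dim sp by blast
qed

end
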